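(* Let $f\in\mathbb{C}[h]$, $\lambda\in S_f$ with $|\lambda|=m\neq 0$, $\dot z\in\mathbb{C}$ and $a\in\mathbb{C}^*$. Then the $m$-dimensional $\mathcal{H}(f)$-modules $A'_{\mathcal{H}(f)}(\lambda,\dot z,a)$ and $B'_{\mathcal{H}(f)}(\lambda,\dot z,a)$ are simple.
   Context: For $f(h)\in\mathbb{C}[h]$, $\mathcal{H}(f)$ is the unital associative $\mathbb{C}$-algebra generated by $x,y,h$ with relations $hx=xf(h)$, $yh=f(h)y$, $yx-xy=f(h)-h$. $S_f$ is the set of maps $\lambda:\mathbb{Z}\to\mathbb{C}$ with $f(\lambda(i))=\lambda(i+1)$ for all $i$; $|\lambda|$ is the nonnegative generator of the subgroup $\{m\in\mathbb{Z}\mid\lambda(i+m)=\lambda(i)\ \forall i\}$. For $\lambda\in S_f$, $\dot z\in\mathbb{C}$: $A_{\mathcal{H}(f)}(\lambda,\dot z)$ is $\mathbb{C}[t,t^{-1}]$ with $ht^i=\lambda(i)t^i$, $xt^i=t^{i+1}$, $yt^i=(\lambda(i)+\dot z)t^{i-1}$; $B_{\mathcal{H}(f)}(\lambda,\dot z)$ is $\mathbb{C}[t,t^{-1}]$ with $ht^i=\lambda(i)t^i$, $xt^i=(\lambda(i+1)+\dot z)t^{i+1}$, $yt^i=t^{i-1}$. These are $\mathcal{H}(f)$-modules, and when $|\lambda|=m\ne0$ and $a\in\mathbb{C}^*$, $\mathbb{C}[t,t^{-1}](t^m-a)$ is a submodule of each; set $A'_{\mathcal{H}(f)}(\lambda,\dot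 z,a)=A_{\mathcal{H}(f)}(\lambda,\dot z)/\mathbb{C}[t,t^{-1}](t^m-a)$ and $B'_{\mathcal{H}(f)}(\lambda,\dot z,a)=B_{\mathcal{H}(f)}(\lambda,\dot z)/\mathbb{C}[t,t^{-1}](t^m-a)$. *)

theory Defs
  imports "HOL-Computational_Algebra.Polynomial" "HOL-Library.Poly_Mapping"
begin

text \<open>Laurent polynomials C[t,t^-1] are modelled as
  finitely supported int-to-complex maps (coefficient of t^i at key i); multiplication is convolution.\<close>

type_synonym laurent = "int \<Rightarrow>\<^sub>0 complex"

definition tpow :: "int \<Rightarrow> laurent" where
  "tpow i = Poly_Mapping.single i 1"

definition cst :: "complex \<Rightarrow> laurent" where
  "cst c = Poly_Mapping.single 0 c"

definition S_f :: "complex poly \<Rightarrow> (int \<Rightarrow> complex) set" where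
  "S_f f = {lam. \<forall>i. poly f (lam i) = lam (i + 1)}"

definition period_group :: "(int \<Rightarrow> complex) \<Rightarrow> int set" where
  "period_group lam = {k. \<forall>i. lam (i + k) = lam i}"

definition lam_abs :: "(int \<Rightarrow> complex) \<Rightarrow> nat" where
  "lam_abs lam = (THE m. period_group lam = {int m * j | j. True})"

definition shift_op :: "int \<Rightarrow> (int \<Rightarrow> complex) \<Rightarrow> laurent \<Rightarrow> laurent" where
  "shift_op d c p = (\<Sum>i\<in>Poly_Mapping.keys p. Poly_Mapping.single (i + d) (c i * Poly_Mapping.lookup p i))"

definition A_h :: "(int \<Rightarrow> complex) \<Rightarrow> laurent \<Rightarrow> laurent" where
  "A_h lam = shift_op 0 lam"
definition A_x :: "laurent \<Rightarrow> laurent" where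
  "A_x = shift_op 1 (\<lambda>_. 1)"
definition A_y :: "(int \<Rightarrow> complex) \<Rightarrow> complex \<Rightarrow> laurent \<Rightarrow> laurent" where
  "A_y lam z = shift_op (-1) (\<lambda>i. lam i + z)"

definition B_h :: "(int \<Rightarrow> complex) \<Rightarrow> laurent \<Rightarrow> laurent" where
  "B_h lam = shift_op 0 lam"
definition B_x :: "(int \<Rightarrow> complex) \<Rightarrow> complex \<Rightarrow> laurent \<Rightarrow> laurent" where
  "B_x lam z = shift_op 1 (\<lambda>i. lam (i + 1) + z)"
definition B_y :: "laurent \<Rightarrow> laurent" where
  "B_y = shift_op (-1) (\<lambda>_. 1)"

text \<open>A submodule of a module over H(f) (generated by x,y,h) given by the actions
  of the generators: a complex subspace stable under the three generators.\<close>
definition is_submodule ::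
  "(laurent \<Rightarrow> laurent) \<Rightarrow> (laurent \<Rightarrow> laurent) \<Rightarrow> (laurent \<Rightarrow> laurent) \<Rightarrow> laurent set \<Rightarrow> bool" where
  "is_submodule X Y H W \<longleftrightarrow>
     0 \<in> W \<and> (\<forall>p\<in>W. \<forall>q\<in>W. p + q \<in> W) \<and> (\<forall>c. \<forall>p\<in>W. cst c * p \<in> W) \<and>
     (\<forall>p\<in>W. X p \<in> W) \<and> (\<forall>p\<in>W. Y p \<in> W) \<and> (\<forall>p\<in>W. H p \<in> W)"

text \<open>The quotient module M/N (M = all Laurent polynomials) is simple: N is a submodule,
  M/N is nonzero, and by the correspondence theorem every submodule of M/N is the image
  of a submodule W with N \<subseteq> W, which must be N or M.\<close>
definition simple_quotient ::
  "(laurent \<Rightarrow> laurent) \<Rightarrow> (laurent \<Rightarrow> laurent) \<Rightarrow> (laurent \<Rightarrow> laurent) \<Rightarrow> laurent set \<Rightarrow> bool" where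
  "simple_quotient X Y H N \<longleftrightarrow>
     is_submodule X Y H N \<and> N \<noteq> UNIV \<and>
     (\<forall>W. is_submodule X Y H W \<and> N \<subseteq> W \<longrightarrow> W = N \<or> W = UNIV)"

text \<open>The quotient vector space C[t,t^-1]/N is m-dimensional, witnessed by the classes of
  t^0, ..., t^(m-1) forming a basis.\<close>
definition quotient_dim_basis :: "laurent set \<Rightarrow> nat \<Rightarrow> bool" where
  "quotient_dim_basis N m \<longleftrightarrow>
     (\<forall>p. \<exists>c. p - (\<Sum>i<m. cst (c i) * tpow (int i)) \<in> N) \<and>
     (\<forall>c. (\<Sum>i<m. cst (c i) * tpow (int i)) \<in> N \<longrightarrow> (\<forall>i<m. c i = 0))"

definition ideal_gen :: "nat \<Rightarrow> complex \<Rightarrow> laurent set" where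
  "ideal_gen m a = {q * (tpow (int m) - cst a) | q. True}"

end

theory Submission
  imports Defs
begin


abbreviation L :: "laurent \<Rightarrow> int \<Rightarrow> complex" where "L \<equiv> Poly_Mapping.lookup"

lemma L_single_mult: "L (Poly_Mapping.single j v * p) k = v * L p (k - j)"
proof -
  have e: "\<And>q. (k = j + q) = (q = k - j)" by auto
  show ?thesis
  unfolding lookup_mult lookup_single
  by (simp add: when_mult e)
qed

lemma L_tpow_mult: "L (tpow j * p) k = L p (k - j)"
  by (simp add: tpow_def L_single_mult)
lemma L_cst_mult: "L (cst c * p) k = c * L p k"
  by (simp add: cst_def L_single_mult)
lemma L_mult_tpow: "L (p * tpow j) k = L p (k - j)"
  by (subst mult.commute) (rule L_tpow_mult)
lemma L_mult_cst: "L (p * cst c) k = c * L p k"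
  by (subst mult.commute) (rule L_cst_mult)
lemma L_tpow: "L (tpow j) k = (if k = j then 1 else 0)"
  by (simp add: tpow_def lookup_single when_def)
lemma L_cst: "L (cst c) k = (if k = 0 then c else 0)"
  by (simp add: cst_def lookup_single when_def)

lemma L_shift: "L (shift_op d c p) k = c (k - d) * L p (k - d)"
proof -
  have "L (shift_op d c p) k = (\<Sum>i\<in>Poly_Mapping.keys p. if i = k - d then c i * L p i else 0)"
    unfolding shift_op_def lookup_sum lookup_single when_def
    by (intro sum.cong) auto
  also have "\<dots> = c (k - d) * L p (k - d)"
    by (cases "k - d \<in> Poly_Mapping.keys p") (auto simp: in_keys_iff)
  finally show ?thesis .
qed

lemma L_g: "L (q * (tpow (int m) - cst a)) k = L q (k - int m) - a * L q k"
  by (simp add: right_diff_distrib lookup_minus L_mult_tpow L_mult_cst)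

lemma L_basis: "L (\<Sum>i<m. cst (c i) * tpow (int i)) k = (if 0 \<le> k \<and> k < int m then c (nat k) else 0)"
proof -
  have "L (\<Sum>i<m. cst (c i) * tpow (int i)) k = (\<Sum>i<m. if int i = k then c i else 0)"
    unfolding lookup_sum by (intro sum.cong) (auto simp: L_cst_mult L_tpow)
  also have "\<dots> = (\<Sum>i\<in>{..<m}. if i = nat k \<and> 0 \<le> k then c i else 0)"
    by (intro sum.cong) auto
  also have "\<dots> = (if 0 \<le> k \<and> k < int m then c (nat k) else 0)"
    by (cases "0 \<le> k") (auto simp: sum.delta)
  finally show ?thesis .
qed

lemma sum_monos: "p = (\<Sum>k\<in>Poly_Mapping.keys p. cst (L p k) * tpow k)"
proof (rule poly_mapping_eqI)
  fix j
  have "L (\<Sum>k\<in>Poly_Mapping.keys p. cst (L p k) * tpow k) j = (\<Sum>k\<in>Poly_Mapping.keys p. if j = k then L p k else 0)"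
    unfolding lookup_sum by (intro sum.cong) (auto simp: L_cst_mult L_tpow)
  also have "\<dots> = L p j" by (auto simp: in_keys_iff)
  finally show "L p j = L (\<Sum>k\<in>Poly_Mapping.keys p. cst (L p k) * tpow k) j" by simp
qed

lemma subgroup_int:
  fixes S :: "int set"
  assumes z: "0 \<in> S" and ad: "\<And>x y. x\<in>S \<Longrightarrow> y\<in>S \<Longrightarrow> x+y\<in>S" and ng: "\<And>x. x\<in>S \<Longrightarrow> -x\<in>S"
  shows "\<exists>M::nat. S = {int M * j | j. True}"
proof (cases "S \<subseteq> {0}")
  case True then show ?thesis using z by (intro exI[of _ 0]) auto
next
  case False
  then obtain x where x: "x\<in>S" "x\<noteq>0" by auto
  have ex: "\<exists>n::nat. n>0 \<and> int n \<in> S"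
  proof (cases "x > 0")
    case True then show ?thesis using x by (intro exI[of _ "nat x"]) auto
  next
    case False then show ?thesis using x ng[OF x(1)] by (intro exI[of _ "nat (-x)"]) auto
  qed
  define d where "d = (LEAST n::nat. n>0 \<and> int n \<in> S)"
  have d: "d>0" "int d \<in> S" using LeastI_ex[OF ex] unfolding d_def by auto
  have dmin: "\<And>n. 0<n \<Longrightarrow> int n \<in> S \<Longrightarrow> d \<le> n" unfolding d_def by (rule Least_le) simp
  have mult: "int d * j \<in> S" for j
  proof (induction j rule: int_induct[where k=0])
    case base then show ?case using z by simp
  next
    case (step1 i) then show ?case using ad[OF step1(2) d(2)] by (simp add: algebra_simps)
  next
    case (step2 i) then show ?case using ad[OF step2(2) ng[OF d(2)]] by (simp add: algebra_simps)
  qed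
  have dv: "int d dvd y" if y: "y \<in> S" for y
  proof -
    have "y mod int d = y + - (int d * (y div int d))" using minus_mult_div_eq_mod[of y "int d"] by simp
    then have inS: "y mod int d \<in> S" using ad[OF y ng[OF mult]] by simp
    have r: "0 \<le> y mod int d" "y mod int d < int d" using d(1) by (simp_all add: pos_mod_sign pos_mod_bound)
    show ?thesis
    proof (rule ccontr)
      assume "\<not> int d dvd y"
      then have "y mod int d \<noteq> 0" by (metis mod_0_imp_dvd)
      then have "y mod int d > 0" using r by linarith
      then have "d \<le> nat (y mod int d)" apply (intro dmin) using inS by auto
      then show False using r by linarith
    qed
  qed
  have "S = {int d * j | j. True}"
  proof
    show "S \<subseteq> {int d * j | j. True}"
    proof
      fix y assume "y \<in> S"
      then obtain j where "y = int d * j" using dv by (meson dvdE)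
      then show "y \<in> {int d * j | j. True}" by blast
    qed
    show "{int d * j | j. True} \<subseteq> S" using mult by blast
  qed
  then show ?thesis by blast
qed

lemma lam_abs_eq:
  assumes "lam_abs lam = m"
  shows "period_group lam = {int m * j | j. True}"
proof -
  have "\<exists>M::nat. period_group lam = {int M * j | j. True}"
  proof (rule subgroup_int)
    show "0 \<in> period_group lam" by (simp add: period_group_def)
    show "x + y \<in> period_group lam" if "x \<in> period_group lam" "y \<in> period_group lam" for x y
    proof -
      have hx: "\<forall>i. lam (i + x) = lam i" and hy: "\<forall>i. lam (i + y) = lam i"
        using that unfolding period_group_def by auto
      have "lam (i + (x + y)) = lam i" for i
      proof -
        have "lam (i + (x + y)) = lam ((i + x) + y)" by (simp add: add.assoc)
        also have "\<dots> = lam (i + x)" using hy by blast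
        also have "\<dots> = lam i" using hx by blast
        finally show ?thesis .
      qed
      then show ?thesis unfolding period_group_def by blast
    qed
    show "- x \<in> period_group lam" if "x \<in> period_group lam" for x
    proof -
      have hx: "\<forall>i. lam (i + x) = lam i"
        using that unfolding period_group_def by auto
      have "lam (i + - x) = lam i" for i
      proof -
        have "lam ((i + - x) + x) = lam (i + - x)" using hx by blast
        then show ?thesis by simp
      qed
      then show ?thesis unfolding period_group_def by blast
    qed
  qed
  then obtain M where M: "period_group lam = {int M * j | j. True}" by blast
  have uniq: "M' = M" if M': "period_group lam = {int M' * j | j. True}" for M'
  proof -
    have "int M \<in> {int M * j | j. True}" by (intro CollectI exI[of _ 1]) simp
    then have "int M \<in> {int M' * j | j. True}" by (subst M'[symmetric], subst M)
    then have a: "int M' dvd int M" unfolding dvd_def by blast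
    have "int M' \<in> {int M' * j | j. True}" by (intro CollectI exI[of _ 1]) simp
    then have "int M' \<in> {int M * j | j. True}" by (subst M[symmetric], subst M')
    then have b: "int M dvd int M'" unfolding dvd_def by blast
    from a b show ?thesis by (simp add: dvd_antisym)
  qed
  have "lam_abs lam = M" unfolding lam_abs_def
    by (rule the_equality) (rule M, rule uniq)
  then show ?thesis using M assms by simp
qed

lemma lam_per:
  assumes "period_group lam = {int m * j | j. True}"
  shows "lam (i + int m * s) = lam i"
proof -
  have "int m * s \<in> period_group lam" using assms by blast
  then show ?thesis by (simp add: period_group_def)
qed

lemma lam_inj:
  assumes S: "lam \<in> S_f f" and P: "period_group lam = {int m * j | j. True}"
    and m: "m \<noteq> 0"
    and ij: "0 \<le> i" "i < int m" "0 \<le> j" "j < int m" and eq: "lam i = lam j"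
  shows "i = j"
proof -
  have step: "lam (x + 1) = poly f (lam x)" for x using S by (simp add: S_f_def)
  have fwd: "lam (i + int k) = lam (j + int k)" for k :: nat
  proof (induction k)
    case 0 then show ?case using eq by simp
  next
    case (Suc k)
    have "lam (i + int (Suc k)) = lam ((i + int k) + 1)" by (simp add: algebra_simps)
    also have "\<dots> = poly f (lam (i + int k))" by (rule step)
    also have "\<dots> = poly f (lam (j + int k))" using Suc by simp
    also have "\<dots> = lam ((j + int k) + 1)" by (rule step[symmetric])
    also have "\<dots> = lam (j + int (Suc k))" by (simp add: algebra_simps)
    finally show ?case .
  qed
  have "j - i \<in> period_group lam"
    unfolding period_group_def
  proof (intro CollectI allI)
    fix n
    define s where "s = (n - i) div int m"
    define k where "k = (n - i) mod int m"
    have k0: "0 \<le> k" using m unfolding k_def by simp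
    have n_eq: "n = (i + k) + int m * s" unfolding k_def s_def
      using mult_div_mod_eq[of "int m" "n - i"] by linarith
    have "lam (n + (j - i)) = lam ((j + k) + int m * s)"
      using n_eq by (intro arg_cong[where f=lam]) linarith
    also have "\<dots> = lam (j + k)" by (rule lam_per[OF P])
    also have "\<dots> = lam (j + int (nat k))" using k0 by simp
    also have "\<dots> = lam (i + int (nat k))" by (rule fwd[symmetric])
    also have "\<dots> = lam (i + k)" using k0 by simp
    also have "\<dots> = lam ((i + k) + int m * s)" by (rule lam_per[OF P, symmetric])
    also have "\<dots> = lam n" using n_eq by simp
    finally show "lam (n + (j - i)) = lam n" .
  qed
  then obtain t where t: "j - i = int m * t" using P by blast
  have "t = 0"
  proof (rule ccontr)
    assume "t \<noteq> 0"
    then have "t \<ge> 1 \<or> t \<le> -1" by linarith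
    then show False
    proof
      assume "t \<ge> 1"
      then have "int m * 1 \<le> int m * t" by (intro mult_left_mono) simp_all
      then show False using t ij by linarith
    next
      assume "t \<le> -1"
      then have "int m * t \<le> int m * (-1)" by (intro mult_left_mono) simp_all
      then show False using t ij by linarith
    qed
  qed
  then show ?thesis using t by simp
qed

lemma N_I: "q * (tpow (int m) - cst a) \<in> ideal_gen m a"
  by (auto simp: ideal_gen_def)

lemma N_E: assumes "p \<in> ideal_gen m a" obtains q where "p = q * (tpow (int m) - cst a)"
  using assms by (auto simp: ideal_gen_def)

lemma N_zero: "0 \<in> ideal_gen m a"
  using N_I[of 0] by simp

lemma N_add: assumes "p \<in> ideal_gen m a" "p' \<in> ideal_gen m a" shows "p + p' \<in> ideal_gen m a"
proof -
  obtain q q' where "p = q * (tpow (int m) - cst a)" "p' = q' * (tpow (int m) - cst a)"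
    using assms by (metis N_E)
  then have "p + p' = (q + q') * (tpow (int m) - cst a)" by (simp add: distrib_right)
  then show ?thesis using N_I by metis
qed

lemma N_diff: assumes "p \<in> ideal_gen m a" "p' \<in> ideal_gen m a" shows "p - p' \<in> ideal_gen m a"
proof -
  obtain q q' where "p = q * (tpow (int m) - cst a)" "p' = q' * (tpow (int m) - cst a)"
    using assms by (metis N_E)
  then have "p - p' = (q - q') * (tpow (int m) - cst a)" by (simp add: left_diff_distrib)
  then show ?thesis using N_I by metis
qed

lemma N_mult: assumes "p \<in> ideal_gen m a" shows "r * p \<in> ideal_gen m a"
proof -
  obtain q where "p = q * (tpow (int m) - cst a)"
    using assms by (metis N_E)
  then have "r * p = (r * q) * (tpow (int m) - cst a)" by (simp add: mult.assoc)
  then show ?thesis using N_I by metis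
qed

lemma tpow_add: "tpow (x + y) = tpow x * tpow y"
  by (simp add: tpow_def mult_single)

lemma cst_mult: "cst (x * y) = cst x * cst y"
  by (simp add: cst_def mult_single)

lemma cst_one: "cst 1 = 1"
  by (simp add: cst_def)

lemma N_step: "tpow (j + int m) - cst a * tpow j \<in> ideal_gen m a"
proof -
  have "tpow (j + int m) - cst a * tpow j = tpow j * (tpow (int m) - cst a)"
    by (simp add: tpow_add algebra_simps)
  then show ?thesis using N_I by metis
qed

lemma N_pow:
  assumes a: "a \<noteq> 0"
  shows "tpow (r + int m * s) - cst (a powi s) * tpow r \<in> ideal_gen m a"
proof (induction s rule: int_induct[where k=0])
  case base
  have "tpow (r + int m * 0) - cst (a powi 0) * tpow r = 0" by (simp add: cst_one)
  then show ?case using N_zero by metis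
next
  case (step1 i)
  define T where "T = tpow (r + int m * i)"
  have e1: "tpow (r + int m * (i + 1)) = T * tpow (int m)"
    unfolding T_def tpow_add[symmetric] by (simp add: algebra_simps)
  have e2: "cst (a powi (i + 1)) = cst (a powi i) * cst a"
    using a by (simp add: power_int_add_1 cst_mult)
  have e3: "tpow (r + int m * i + int m) = T * tpow (int m)"
    unfolding T_def tpow_add[symmetric] by simp
  have "tpow (r + int m * (i + 1)) - cst (a powi (i + 1)) * tpow r
      = (tpow (r + int m * i + int m) - cst a * tpow (r + int m * i))
        + cst a * (tpow (r + int m * i) - cst (a powi i) * tpow r)"
    unfolding e1 e2 e3 T_def[symmetric] by (simp add: algebra_simps)
  then show ?case using N_add[OF N_step N_mult[OF step1(2)]] by metis
next
  case (step2 i)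
  define T where "T = tpow (r + int m * (i - 1))"
  define C where "C = cst (a powi (i - 1))"
  have e1: "tpow (r + int m * i) = T * tpow (int m)"
    unfolding T_def tpow_add[symmetric] by (simp add: algebra_simps)
  have e2: "cst (a powi i) = C * cst a"
    using a power_int_add_1[of a "i - 1"] unfolding C_def by (simp add: cst_mult)
  have e3: "tpow (r + int m * (i - 1) + int m) = T * tpow (int m)"
    unfolding T_def tpow_add[symmetric] by simp
  have ia: "cst (inverse a) * cst a = 1"
    using a by (simp add: cst_mult[symmetric] cst_one)
  have "tpow (r + int m * (i - 1)) - cst (a powi (i - 1)) * tpow r
      = cst (inverse a) * ((tpow (r + int m * i) - cst (a powi i) * tpow r)
          - (tpow (r + int m * (i - 1) + int m) - cst a * tpow (r + int m * (i - 1))))"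
  proof -
    have "cst (inverse a) * ((T * tpow (int m) - C * cst a * tpow r) - (T * tpow (int m) - cst a * T))
       = (cst (inverse a) * cst a) * (T - C * tpow r)"
      by (simp add: algebra_simps)
    also have "\<dots> = T - C * tpow r" using ia by simp
    finally show ?thesis unfolding e1 e2 e3 T_def[symmetric] C_def[symmetric] by simp
  qed
  then show ?case using N_mult[OF N_diff[OF step2(2) N_step]] by metis
qed


lemma sumeq_lem:
  assumes r: "0 \<le> r" "r < int m"
  shows "(\<Sum>i<m. cst ((c(nat r := c (nat r) + w)) i) * tpow (int i)) = (\<Sum>i<m. cst (c i) * tpow (int i)) + cst w * tpow r"
proof (rule poly_mapping_eqI)
    fix j
    show "L (\<Sum>i<m. cst ((c(nat r := c (nat r) + w)) i) * tpow (int i)) j = L ((\<Sum>i<m. cst (c i) * tpow (int i)) + cst w * tpow r) j"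
    proof (cases "j = r")
      case True
      then show ?thesis unfolding lookup_add L_basis L_cst_mult L_tpow using r by simp
    next
      case False
      have "0 \<le> j \<Longrightarrow> nat j \<noteq> nat r" using False r by linarith
      then show ?thesis unfolding lookup_add L_basis L_cst_mult L_tpow using False by simp
    qed
qed
lemma single_eq: "Poly_Mapping.single k v = cst v * tpow k"
  by (simp add: cst_def tpow_def mult_single)

lemma t1: "(\<Sum>k\<in>{}. cst (v k) * tpow k) - (\<Sum>i<m. cst 0 * tpow (int i)) = 0"
    by (simp add: cst_def)

lemma t2: "finite K \<Longrightarrow> k \<notin> K \<Longrightarrow> (\<Sum>k\<in>insert k K. cst (v k) * tpow k) = Poly_Mapping.single k (v k) + (\<Sum>k\<in>K. cst (v k) * tpow k)"
  by (simp add: single_eq)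

lemma t3: "\<And>x s b w::laurent. (x + s) - (b + w) = (x - w) + (s - b)" by (simp add: algebra_simps)
lemma N_single:
  assumes a: "a \<noteq> 0"
  shows "Poly_Mapping.single k v - cst (v * a powi (k div int m)) * tpow (k mod int m) \<in> ideal_gen m a"
proof -
  have k: "k = k mod int m + int m * (k div int m)" using mult_div_mod_eq[of "int m" k] by linarith
  have "Poly_Mapping.single k v - cst (v * a powi (k div int m)) * tpow (k mod int m)
      = cst v * (tpow (k mod int m + int m * (k div int m)) - cst (a powi (k div int m)) * tpow (k mod int m))"
    by (subst k[symmetric]) (simp add: single_eq cst_mult algebra_simps)
  then show ?thesis using N_mult[OF N_pow[OF a]] by metis
qed

lemma reduce_set:
  assumes a: "a \<noteq> 0" and m: "m \<noteq> 0" and fin: "finite K"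
  shows "\<exists>c. (\<Sum>k\<in>K. cst (v k) * tpow k) - (\<Sum>i<m. cst (c i) * tpow (int i)) \<in> ideal_gen m a"
  using fin
proof (induction K rule: finite_induct)
  case empty
  show ?case using N_zero t1 by (intro exI[of _ "\<lambda>_. 0"]) simp
next
  case (insert k K)
  from insert(3) obtain c where c: "(\<Sum>k\<in>K. cst (v k) * tpow k) - (\<Sum>i<m. cst (c i) * tpow (int i)) \<in> ideal_gen m a"
    by blast
  define r where "r = k mod int m"
  define w where "w = v k * a powi (k div int m)"
  have r: "0 \<le> r" "r < int m" using m unfolding r_def by simp_all
  have ns: "Poly_Mapping.single k (v k) - cst w * tpow r \<in> ideal_gen m a"
    unfolding w_def r_def by (rule N_single[OF a])
  have "(\<Sum>k\<in>insert k K. cst (v k) * tpow k) - (\<Sum>i<m. cst ((c(nat r := c (nat r) + w)) i) * tpow (int i))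
      = (Poly_Mapping.single k (v k) - cst w * tpow r)
        + ((\<Sum>k\<in>K. cst (v k) * tpow k) - (\<Sum>i<m. cst (c i) * tpow (int i)))"
    unfolding sumeq_lem[OF r] t2[OF insert(1,2)] by (rule t3)
  also have "\<dots> \<in> ideal_gen m a" by (rule N_add[OF ns c])
  finally show ?case by blast
qed

lemma reduce:
  assumes a: "a \<noteq> 0" and m: "m \<noteq> 0"
  shows "\<exists>c. p - (\<Sum>i<m. cst (c i) * tpow (int i)) \<in> ideal_gen m a"
proof -
  obtain c where c: "(\<Sum>k\<in>Poly_Mapping.keys p. cst (L p k) * tpow k) - (\<Sum>i<m. cst (c i) * tpow (int i)) \<in> ideal_gen m a"
    using reduce_set[OF a m finite_keys[of p], where v="L p"] by blast
  have "p - (\<Sum>i<m. cst (c i) * tpow (int i)) \<in> ideal_gen m a"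
    using c by (subst (asm) sum_monos[symmetric])
  then show ?thesis by blast
qed
lemma keys_nonempty: "r \<noteq> 0 \<Longrightarrow> \<exists>k. L r k \<noteq> 0"
  by (metis poly_mapping_eqI lookup_zero)

lemma ideal_support_zero:
  assumes a: "a \<noteq> 0" and m: "m \<noteq> 0" and r: "r = q * (tpow (int m) - cst a)"
    and supp: "\<And>k. L r k \<noteq> 0 \<Longrightarrow> 0 \<le> k \<and> k < int m"
  shows "q = 0"
proof (rule ccontr)
  assume q: "q \<noteq> 0"
  define K where "K = Poly_Mapping.keys q"
  have fin: "finite K" unfolding K_def by simp
  have ne: "K \<noteq> {}" using q keys_nonempty[OF q] unfolding K_def by (auto simp: in_keys_iff)
  define kmax where "kmax = Max K"
  define kmin where "kmin = Min K"
  have inmax: "kmax \<in> K" and inmin: "kmin \<in> K" unfolding kmax_def kmin_def using fin ne by auto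
  have le: "kmin \<le> kmax" unfolding kmax_def kmin_def using fin ne by (simp add: Min_le_iff)
  have q1: "L q (kmax + int m) = 0"
  proof (rule ccontr)
    assume "L q (kmax + int m) \<noteq> 0"
    then have "kmax + int m \<in> K" unfolding K_def by (simp add: in_keys_iff)
    then have "kmax + int m \<le> kmax" unfolding kmax_def using fin by (rule Max_ge[rotated])
    then show False using m by simp
  qed
  have q2: "L q (kmin - int m) = 0"
  proof (rule ccontr)
    assume "L q (kmin - int m) \<noteq> 0"
    then have "kmin - int m \<in> K" unfolding K_def by (simp add: in_keys_iff)
    then have "kmin \<le> kmin - int m" unfolding kmin_def using fin by (rule Min_le[rotated])
    then show False using m by simp
  qed
  have "L r (kmax + int m) = L q kmax" using q1 unfolding r by (simp add: L_g)
  moreover have "L q kmax \<noteq> 0" using inmax unfolding K_def by (simp add: in_keys_iff)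
  ultimately have "kmax + int m < int m" using supp by metis
  moreover have "L r kmin = - a * L q kmin" using q2 unfolding r by (simp add: L_g)
  moreover have "L q kmin \<noteq> 0" using inmin unfolding K_def by (simp add: in_keys_iff)
  ultimately have "0 \<le> kmin" "kmax < 0" using supp a by (metis mult_eq_0_iff neg_equal_0_iff_equal, linarith)
  then show False using le by linarith
qed

lemma basis_indep:
  assumes a: "a \<noteq> 0" and m: "m \<noteq> 0"
    and mem: "(\<Sum>i<m. cst (c i) * tpow (int i)) \<in> ideal_gen m a"
  shows "\<forall>i<m. c i = 0"
proof -
  obtain q where q: "(\<Sum>i<m. cst (c i) * tpow (int i)) = q * (tpow (int m) - cst a)"
    using mem by (rule N_E)
  have "q = 0"
    by (rule ideal_support_zero[OF a m q]) (simp add: L_basis split: if_splits)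
  then have "(\<Sum>i<m. cst (c i) * tpow (int i)) = 0" using q by simp
  then have z: "L (\<Sum>i<m. cst (c i) * tpow (int i)) (int i) = 0" for i by simp
  show ?thesis
  proof (intro allI impI)
    fix i assume "i < m"
    then show "c i = 0" using z[of i] unfolding L_basis by simp
  qed
qed

lemma N_not_univ:
  assumes a: "a \<noteq> 0" and m: "m \<noteq> 0"
  shows "ideal_gen m a \<noteq> UNIV"
proof
  assume "ideal_gen m a = UNIV"
  then have "tpow 0 \<in> ideal_gen m a" by simp
  then obtain q where q: "tpow 0 = q * (tpow (int m) - cst a)" by (rule N_E)
  have "q = 0"
    by (rule ideal_support_zero[OF a m q]) (use m in \<open>simp add: L_tpow split: if_splits\<close>)
  then have "tpow 0 = 0" using q by simp
  then have "L (tpow 0) 0 = 0" by simp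
  then show False by (simp add: L_tpow)
qed

lemma shift_g:
  assumes per: "\<And>i. c (i + int m) = c i"
  shows "shift_op d c (q * (tpow (int m) - cst a)) = shift_op d c q * (tpow (int m) - cst a)"
proof (rule poly_mapping_eqI)
  fix k
  have c1: "c (k - int m - d) = c (k - d)" using per[of "k - int m - d"] by simp
  have e: "k - d - int m = k - int m - d" by simp
  show "L (shift_op d c (q * (tpow (int m) - cst a))) k = L (shift_op d c q * (tpow (int m) - cst a)) k"
    unfolding L_shift L_g e c1 by (simp add: algebra_simps)
qed

lemma N_shift:
  assumes per: "\<And>i. c (i + int m) = c i" and p: "p \<in> ideal_gen m a"
  shows "shift_op d c p \<in> ideal_gen m a"
proof -
  obtain q where pq: "p = q * (tpow (int m) - cst a)" using p by (rule N_E)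
  have "shift_op d c p = shift_op d c q * (tpow (int m) - cst a)"
    unfolding pq by (rule shift_g[of c m, OF per])
  then show ?thesis by (simp only: N_I)
qed

lemma N_submod:
  assumes "\<And>i. c1 (i + int m) = c1 i" "\<And>i. c2 (i + int m) = c2 i" "\<And>i. c3 (i + int m) = c3 i"
  shows "is_submodule (shift_op d1 c1) (shift_op d2 c2) (shift_op d3 c3) (ideal_gen m a)"
proof -
  have 1: "\<forall>p\<in>ideal_gen m a. \<forall>q\<in>ideal_gen m a. p + q \<in> ideal_gen m a"
  proof (intro ballI)
    fix p q assume "p \<in> ideal_gen m a" "q \<in> ideal_gen m a"
    then show "p + q \<in> ideal_gen m a" by (rule N_add)
  qed
  have 2: "\<forall>c. \<forall>p\<in>ideal_gen m a. cst c * p \<in> ideal_gen m a"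
  proof (intro allI ballI)
    fix c p assume "p \<in> ideal_gen m a"
    then show "cst c * p \<in> ideal_gen m a" by (rule N_mult)
  qed
  have 3: "\<forall>p\<in>ideal_gen m a. shift_op d1 c1 p \<in> ideal_gen m a"
  proof
    fix p assume "p \<in> ideal_gen m a"
    then show "shift_op d1 c1 p \<in> ideal_gen m a" by (rule N_shift[of c1 m, OF assms(1)])
  qed
  have 4: "\<forall>p\<in>ideal_gen m a. shift_op d2 c2 p \<in> ideal_gen m a"
  proof
    fix p assume "p \<in> ideal_gen m a"
    then show "shift_op d2 c2 p \<in> ideal_gen m a" by (rule N_shift[of c2 m, OF assms(2)])
  qed
  have 5: "\<forall>p\<in>ideal_gen m a. shift_op d3 c3 p \<in> ideal_gen m a"
  proof
    fix p assume "p \<in> ideal_gen m a"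
    then show "shift_op d3 c3 p \<in> ideal_gen m a" by (rule N_shift[of c3 m, OF assms(3)])
  qed
  show ?thesis unfolding is_submodule_def by (intro conjI N_zero 1 2 3 4 5)
qed



lemma W_add: "is_submodule X Y H W \<Longrightarrow> p \<in> W \<Longrightarrow> q \<in> W \<Longrightarrow> p + q \<in> W"
  unfolding is_submodule_def by blast
lemma W_smult: "is_submodule X Y H W \<Longrightarrow> p \<in> W \<Longrightarrow> cst c * p \<in> W"
  unfolding is_submodule_def by blast
lemma W_zero: "is_submodule X Y H W \<Longrightarrow> 0 \<in> W"
  unfolding is_submodule_def by blast
lemma W_X: "is_submodule X Y H W \<Longrightarrow> p \<in> W \<Longrightarrow> X p \<in> W"
  unfolding is_submodule_def by blast
lemma W_Y: "is_submodule X Y H W \<Longrightarrow> p \<in> W \<Longrightarrow> Y p \<in> W"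
  unfolding is_submodule_def by blast
lemma W_H: "is_submodule X Y H W \<Longrightarrow> p \<in> W \<Longrightarrow> H p \<in> W"
  unfolding is_submodule_def by blast

lemma cst_neg: "cst (-1) * q = - q"
  by (rule poly_mapping_eqI) (simp add: L_cst_mult)

lemma W_diff:
  assumes "is_submodule X Y H W" "p \<in> W" "q \<in> W" shows "p - q \<in> W"
proof -
  have "p + cst (-1) * q \<in> W" by (intro W_add[OF assms(1)] W_smult[OF assms(1)] assms(2,3))
  then show ?thesis by (simp add: cst_neg)
qed

lemma W_sum:
  assumes sub: "is_submodule X Y H W" and fin: "finite K"
  shows "(\<forall>k\<in>K. f k \<in> W) \<Longrightarrow> sum f K \<in> W"
  using fin
proof (induction K rule: finite_induct)
  case empty then show ?case using W_zero[OF sub] by simp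
next
  case (insert k K)
  have "f k + sum f K \<in> W" using insert W_add[OF sub] by simp
  then show ?case using insert(1,2) by simp
qed

lemma W_univ:
  assumes sub: "is_submodule X Y H W" and all: "\<And>k. tpow k \<in> W"
  shows "W = UNIV"
proof -
  have "p \<in> W" for p
  proof -
    have "(\<Sum>k\<in>Poly_Mapping.keys p. cst (L p k) * tpow k) \<in> W"
      by (rule W_sum[OF sub finite_keys]) (simp add: W_smult[OF sub all])
    then show ?thesis by (subst (asm) sum_monos[symmetric])
  qed
  then show ?thesis by blast
qed

lemma extract_tpow:
  assumes sub: "is_submodule X Y (shift_op 0 lam) W"
    and inj: "\<And>i j. 0 \<le> i \<Longrightarrow> i < int m \<Longrightarrow> 0 \<le> j \<Longrightarrow> j < int m \<Longrightarrow> lam i = lam j \<Longrightarrow> i = j"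
  shows "r \<in> W \<Longrightarrow> r \<noteq> 0 \<Longrightarrow> (\<forall>k. L r k \<noteq> 0 \<longrightarrow> 0 \<le> k \<and> k < int m) \<Longrightarrow> \<exists>i. tpow i \<in> W"
proof (induction "card (Poly_Mapping.keys r)" arbitrary: r rule: less_induct)
  case less
  define K where "K = Poly_Mapping.keys r"
  have fin: "finite K" unfolding K_def by simp
  obtain i0 where i0: "L r i0 \<noteq> 0" using keys_nonempty[OF less.prems(2)] by blast
  then have i0K: "i0 \<in> K" unfolding K_def by (simp add: in_keys_iff)
  show ?case
  proof (cases "K - {i0} = {}")
    case True
    have "tpow i0 = cst (inverse (L r i0)) * r"
    proof (rule poly_mapping_eqI)
      fix k
      show "L (tpow i0) k = L (cst (inverse (L r i0)) * r) k"
      proof (cases "k = i0")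
        case True then show ?thesis using i0 by (simp add: L_tpow L_cst_mult)
      next
        case False
        then have "k \<notin> K" using \<open>K - {i0} = {}\<close> by blast
        then have "L r k = 0" unfolding K_def by (simp add: in_keys_iff)
        then show ?thesis using False by (simp add: L_tpow L_cst_mult)
      qed
    qed
    then have "tpow i0 \<in> W" using W_smult[OF sub less.prems(1)] by simp
    then show ?thesis by blast
  next
    case False
    then obtain j where j: "j \<in> K" "j \<noteq> i0" by blast
    have Lj: "L r j \<noteq> 0" using j unfolding K_def by (simp add: in_keys_iff)
    define r' where "r' = shift_op 0 lam r + cst (- lam j) * r"
    have Lr': "L r' k = (lam k - lam j) * L r k" for k
      unfolding r'_def lookup_add L_shift L_cst_mult by (simp add: algebra_simps)
    have r'W: "r' \<in> W" unfolding r'_def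
      by (intro W_add[OF sub] W_H[OF sub] W_smult[OF sub] less.prems(1))
    have neq: "lam i0 \<noteq> lam j"
    proof
      assume "lam i0 = lam j"
      moreover have "0 \<le> i0 \<and> i0 < int m" using less.prems(3) i0 by blast
      moreover have "0 \<le> j \<and> j < int m" using less.prems(3) Lj by blast
      ultimately have "i0 = j" using inj by blast
      then show False using j by simp
    qed
    have ri0: "L r' i0 \<noteq> 0" using Lr' neq i0 by simp
    have sub': "Poly_Mapping.keys r' \<subseteq> K - {j}"
    proof
      fix k assume "k \<in> Poly_Mapping.keys r'"
      then have "L r' k \<noteq> 0" by (simp add: in_keys_iff)
      then have "L r k \<noteq> 0" "k \<noteq> j" using Lr'[of k] by auto
      then show "k \<in> K - {j}" unfolding K_def by (simp add: in_keys_iff)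
    qed
    have "card (Poly_Mapping.keys r') < card K"
    proof -
      have "K - {j} \<subset> K" using j by blast
      then have "Poly_Mapping.keys r' \<subset> K" using sub' by blast
      then show ?thesis using fin by (rule psubset_card_mono[rotated])
    qed
    moreover have "r' \<noteq> 0" using ri0 by auto
    moreover have "\<forall>k. L r' k \<noteq> 0 \<longrightarrow> 0 \<le> k \<and> k < int m"
      using less.prems(3) Lr' by auto
    ultimately show ?thesis using less.hyps r'W unfolding K_def by blast
  qed
qed

lemma W_from_N:
  assumes sub: "is_submodule X Y H W" and NW: "ideal_gen m a \<subseteq> W" and t: "tpow i \<in> W" and a: "a \<noteq> 0"
  shows "tpow (i + int m * s) \<in> W"
proof -
  have "tpow (i + int m * s) - cst (a powi s) * tpow i \<in> W" using N_pow[OF a] NW by blast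
  moreover have "cst (a powi s) * tpow i \<in> W" by (rule W_smult[OF sub t])
  ultimately have "(tpow (i + int m * s) - cst (a powi s) * tpow i) + cst (a powi s) * tpow i \<in> W"
    by (rule W_add[OF sub])
  then show ?thesis by simp
qed

lemma A_x_tpow: "A_x (tpow k) = tpow (k + 1)"
proof (rule poly_mapping_eqI)
  fix j show "L (A_x (tpow k)) j = L (tpow (k + 1)) j"
    unfolding A_x_def L_shift L_tpow by auto
qed

lemma B_y_tpow: "B_y (tpow k) = tpow (k - 1)"
proof (rule poly_mapping_eqI)
  fix j show "L (B_y (tpow k)) j = L (tpow (k - 1)) j"
    unfolding B_y_def L_shift L_tpow by auto
qed

lemma genA:
  assumes sub: "is_submodule A_x Y H W" and NW: "ideal_gen m a \<subseteq> W" and t: "tpow i \<in> W"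
    and a: "a \<noteq> 0" and m: "m \<noteq> 0"
  shows "W = UNIV"
proof (rule W_univ[OF sub])
  have up: "tpow (k + int n) \<in> W" if "tpow k \<in> W" for k n
  proof (induction n)
    case 0 then show ?case using that by simp
  next
    case (Suc n)
    have "A_x (tpow (k + int n)) \<in> W" by (rule W_X[OF sub Suc])
    moreover have "k + int n + 1 = k + int (Suc n)" by simp
    ultimately show ?case unfolding A_x_tpow by simp
  qed
  fix K
  define s where "s = (K - i) div int m"
  have "int m * s \<le> K - i"
    unfolding s_def using mult_div_mod_eq[of "int m" "K - i"] pos_mod_sign[of "int m" "K - i"] m by linarith
  then have e: "(i + int m * s) + int (nat (K - (i + int m * s))) = K" by simp
  have "tpow ((i + int m * s) + int (nat (K - (i + int m * s)))) \<in> W"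
    by (rule up[OF W_from_N[OF sub NW t a]])
  then show "tpow K \<in> W" unfolding e .
qed

lemma genB:
  assumes sub: "is_submodule X B_y H W" and NW: "ideal_gen m a \<subseteq> W" and t: "tpow i \<in> W"
    and a: "a \<noteq> 0" and m: "m \<noteq> 0"
  shows "W = UNIV"
proof (rule W_univ[OF sub])
  have down: "tpow (k - int n) \<in> W" if "tpow k \<in> W" for k n
  proof (induction n)
    case 0 then show ?case using that by simp
  next
    case (Suc n)
    have "B_y (tpow (k - int n)) \<in> W" by (rule W_Y[OF sub Suc])
    moreover have "k - int n - 1 = k - int (Suc n)" by simp
    ultimately show ?case unfolding B_y_tpow by simp
  qed
  fix K
  define s where "s = - ((i - K) div int m)"
  have "int m * ((i - K) div int m) \<le> i - K"
    using mult_div_mod_eq[of "int m" "i - K"] pos_mod_sign[of "int m" "i - K"] m by linarith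
  then have "K \<le> i + int m * s" unfolding s_def by simp
  then have e: "(i + int m * s) - int (nat ((i + int m * s) - K)) = K" by simp
  have "tpow ((i + int m * s) - int (nat ((i + int m * s) - K))) \<in> W"
    by (rule down[OF W_from_N[OF sub NW t a]])
  then show "tpow K \<in> W" unfolding e .
qed

lemma simple_gen:
  assumes sub: "is_submodule X Y (shift_op 0 lam) (ideal_gen m a)"
    and inj: "\<And>i j. 0 \<le> i \<Longrightarrow> i < int m \<Longrightarrow> 0 \<le> j \<Longrightarrow> j < int m \<Longrightarrow> lam i = lam j \<Longrightarrow> i = j"
    and gen: "\<And>W i. is_submodule X Y (shift_op 0 lam) W \<Longrightarrow> ideal_gen m a \<subseteq> W \<Longrightarrow> tpow i \<in> W \<Longrightarrow> W = UNIV"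
    and a: "a \<noteq> 0" and m: "m \<noteq> 0"
  shows "simple_quotient X Y (shift_op 0 lam) (ideal_gen m a)"
  unfolding simple_quotient_def
proof (intro conjI allI impI)
  show "is_submodule X Y (shift_op 0 lam) (ideal_gen m a)" by (rule sub)
  show "ideal_gen m a \<noteq> UNIV" by (rule N_not_univ[OF a m])
  fix W assume W: "is_submodule X Y (shift_op 0 lam) W \<and> ideal_gen m a \<subseteq> W"
  then have subW: "is_submodule X Y (shift_op 0 lam) W" and NW: "ideal_gen m a \<subseteq> W" by auto
  show "W = ideal_gen m a \<or> W = UNIV"
  proof (cases "W = ideal_gen m a")
    case True then show ?thesis by simp
  next
    case False
    then obtain p where p: "p \<in> W" "p \<notin> ideal_gen m a" using NW by blast
    obtain c where c: "p - (\<Sum>i<m. cst (c i) * tpow (int i)) \<in> ideal_gen m a"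
      using reduce[OF a m] by blast
    define r where "r = (\<Sum>i<m. cst (c i) * tpow (int i))"
    have "p - (p - r) \<in> W" using W_diff[OF subW p(1)] c NW unfolding r_def by blast
    then have rW: "r \<in> W" by simp
    have rne: "r \<noteq> 0" using c p(2) unfolding r_def by auto
    have supp: "\<forall>k. L r k \<noteq> 0 \<longrightarrow> 0 \<le> k \<and> k < int m"
      unfolding r_def L_basis by (simp split: if_splits)
    obtain i where "tpow i \<in> W" using extract_tpow[OF subW inj rW rne supp] by blast
    then show ?thesis using gen[OF subW NW] by blast
  qed
qed

theorem lemma8:
  fixes f :: "complex poly" and lam :: "int \<Rightarrow> complex" and m :: nat
    and z a :: complex
  assumes "lam \<in> S_f f"
    and "lam_abs lam = m" and "m \<noteq> 0"
    and "a \<noteq> 0"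
  shows "quotient_dim_basis (ideal_gen m a) m
       \<and> simple_quotient A_x (A_y lam z) (A_h lam) (ideal_gen m a)
       \<and> simple_quotient (B_x lam z) B_y (B_h lam) (ideal_gen m a)"
proof -
  note S = assms(1) and m = assms(3) and a = assms(4)
  have P: "period_group lam = {int m * j | j. True}" by (rule lam_abs_eq[OF assms(2)])
  have per: "lam (i + int m) = lam i" for i using lam_per[OF P, of i 1] by simp
  have injl: "\<And>i j. 0 \<le> i \<Longrightarrow> i < int m \<Longrightarrow> 0 \<le> j \<Longrightarrow> j < int m \<Longrightarrow> lam i = lam j \<Longrightarrow> i = j"
    by (rule lam_inj[OF S P m])
  have Q: "quotient_dim_basis (ideal_gen m a) m"
    unfolding quotient_dim_basis_def using reduce[OF a m] basis_indep[OF a m] by blast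
  have subA: "is_submodule A_x (A_y lam z) (shift_op 0 lam) (ideal_gen m a)"
    unfolding A_x_def A_y_def by (rule N_submod) (simp_all add: per)
  have subB: "is_submodule (B_x lam z) B_y (shift_op 0 lam) (ideal_gen m a)"
  proof -
    have "lam (i + int m + 1) = lam (i + 1)" for i using per[of "i + 1"] by (simp add: algebra_simps)
    then show ?thesis unfolding B_x_def B_y_def by (intro N_submod) (simp_all add: per)
  qed
  have SA: "simple_quotient A_x (A_y lam z) (shift_op 0 lam) (ideal_gen m a)"
  proof (rule simple_gen[OF subA _ _ a m])
    show "\<And>i j. 0 \<le> i \<Longrightarrow> i < int m \<Longrightarrow> 0 \<le> j \<Longrightarrow> j < int m \<Longrightarrow> lam i = lam j \<Longrightarrow> i = j"
      by (rule injl)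
    show "\<And>W i. is_submodule A_x (A_y lam z) (shift_op 0 lam) W \<Longrightarrow> ideal_gen m a \<subseteq> W \<Longrightarrow> tpow i \<in> W \<Longrightarrow> W = UNIV"
      by (rule genA[OF _ _ _ a m])
  qed
  have SB: "simple_quotient (B_x lam z) B_y (shift_op 0 lam) (ideal_gen m a)"
  proof (rule simple_gen[OF subB _ _ a m])
    show "\<And>i j. 0 \<le> i \<Longrightarrow> i < int m \<Longrightarrow> 0 \<le> j \<Longrightarrow> j < int m \<Longrightarrow> lam i = lam j \<Longrightarrow> i = j"
      by (rule injl)
    show "\<And>W i. is_submodule (B_x lam z) B_y (shift_op 0 lam) W \<Longrightarrow> ideal_gen m a \<subseteq> W \<Longrightarrow> tpow i \<in> W \<Longrightarrow> W = UNIV"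
      by (rule genB[OF _ _ _ a m])
  qed
  show ?thesis using Q SA SB unfolding A_h_def B_h_def by blast
qed

end
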